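(* Any unsound deterministic negotiation contains an anti-pattern (of type $\mathcal{B}$, $\mathcal{F}$ or $\mathcal{C}$).
   Context: A negotiation is a tuple $\mathcal{N}=(\mathit{Proc},N,\mathit{dom},R,\delta)$ where $\mathit{Proc}$ is a finite set of processes, $N$ is a finite set of nodes, $\mathit{dom}:N\to 2^{\mathit{Proc}}\setminus\{\emptyset\}$, there are two distinguished nodes $n_{\mathit{init}},n_{\mathit{fin}}$ with $\mathit{dom}(n_{\mathit{init}})=\mathit{dom}(n_{\mathit{fin}})=\mathit{Proc}$, $R$ is a set of results, each node $n$ has a set $\mathit{out}(n)\subseteq R$ of results (nonempty for $n\neq n_{\mathit{fin}}$), and $\delta(n,a,p)\subseteq N$ is defined and nonempty exactly when $a\in\mathit{out}(n)$ and $p\in\mathit{dom}(n)$, with $p\in\mathit{dom}(n')$ for all $n'\in\delta(n,a,p)$. $\mathcal{N}$ is deterministic if every $\delta(n,a,p)$ is a singleton, identified with its element. A configuration is a map $C$ assigning to each process a nonempty set of nodes; $C_{\mathit{init}}(p)=\{n_{\mathit{init}}\}$, $C_{\mathit{fin}}(p)=\{n_{\mathit{fin}}\}$. A node $n$ is enabled in $C$ if $n\in C(p)$ for all $p\in\mathit{dom}(n)$. If $n$ is enabled and $a\in\mathit{out}(n)$ then $C\xrightarrow{(n,a)}C'$ with $C'(p)=\delta(n,a,p)$ for $p\in\mathit{dom}(n)$, $C'(p)=C(p)$ otherwise. Runs are sequences of such steps; $\mathcal{N}$ is sound if every finite run from $C_{\mathit{init}}$ can be extended to a finite run ending in $C_{\mathit{fin}}$.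 The graph of $\mathcal{N}$ has vertex set $N$ and edges $n\xrightarrow{p,a}n'$ whenever $n'\in\delta(n,a,p)$; a local path is a path in this graph; a $p$-path is a local path all of whose edges are labelled by process $p$; a local circuit is a local path with at least one edge whose first and last nodes coincide. A node $n$ of a local path $\pi$ dominates $\pi$ if $\mathit{dom}(m)\subseteq\mathit{dom}(n)$ for every node $m$ of $\pi$. A tuple $(p_1,p_2,n_1,n_2)\in\mathit{Proc}^2\times N^2$ is a fork of a deterministic $\mathcal{N}$ if there is a local path from $n_{\mathit{init}}$ to a node $n$ and a result $a\in\mathit{out}(n)$ such that $p_i\in\mathit{dom}(n)\cap\mathit{dom}(n_i)$ for $i=1,2$, and for $i=1,2$ there is a $p_i$-path $\pi_i$ from $\delta(n,a,p_i)$ to $n_i$, with $\pi_1,\pi_2$ having no node in common. Anti-patterns: type $\mathcal{B}$: a $p$-path from $n_{\mathit{init}}$ to a node $n$ such that no $p$-path leads from $n$ to $n_{\mathit{fin}}$; type $\mathcal{F}$: a fork $(p_1,p_2,n_1,n_2)$ with $p_2\in\mathit{dom}(n_1)$ and $p_1\in\mathit{dom}(n_2)$; type $\mathcal{C}$: a local circuit without a dominating node. *)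

theory Defs
  imports Main
begin

record ('p, 'n, 'r) negotiation =
  Proc    :: "'p set"
  Nodes   :: "'n set"
  ndom    :: "'n \<Rightarrow> 'p set"
  ninit   :: 'n
  nfin    :: 'n
  Results :: "'r set"
  out     :: "'n \<Rightarrow> 'r set"
  delta   :: "'n \<Rightarrow> 'r \<Rightarrow> 'p \<Rightarrow> 'n set"

text \<open>Well-formedness of a negotiation. delta n a p is only meaningful (defined)
  when a is in out n and p in ndom n; its values elsewhere are never used.\<close>
definition is_negotiation :: "('p, 'n, 'r) negotiation \<Rightarrow> bool" where
  "is_negotiation Ng \<longleftrightarrow>
     finite (Proc Ng) \<and> finite (Nodes Ng) \<and>
     (\<forall>n\<in>Nodes Ng. ndom Ng n \<noteq> {} \<and> ndom Ng n \<subseteq> Proc Ng) \<and>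
     ninit Ng \<in> Nodes Ng \<and> nfin Ng \<in> Nodes Ng \<and>
     ndom Ng (ninit Ng) = Proc Ng \<and> ndom Ng (nfin Ng) = Proc Ng \<and>
     (\<forall>n\<in>Nodes Ng. out Ng n \<subseteq> Results Ng) \<and>
     (\<forall>n\<in>Nodes Ng. n \<noteq> nfin Ng \<longrightarrow> out Ng n \<noteq> {}) \<and>
     (\<forall>n\<in>Nodes Ng. \<forall>a\<in>out Ng n. \<forall>p\<in>ndom Ng n.
        delta Ng n a p \<noteq> {} \<and> delta Ng n a p \<subseteq> Nodes Ng \<and>
        (\<forall>n'\<in>delta Ng n a p. p \<in> ndom Ng n'))"

definition deterministic :: "('p, 'n, 'r) negotiation \<Rightarrow> bool" where
  "deterministic Ng \<longleftrightarrow>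
     (\<forall>n\<in>Nodes Ng. \<forall>a\<in>out Ng n. \<forall>p\<in>ndom Ng n. \<exists>n'. delta Ng n a p = {n'})"

definition dsucc :: "('p, 'n, 'r) negotiation \<Rightarrow> 'n \<Rightarrow> 'r \<Rightarrow> 'p \<Rightarrow> 'n" where
  "dsucc Ng n a p = the_elem (delta Ng n a p)"

text \<open>Configurations are maps from processes to sets of nodes (only values on Proc matter).\<close>
definition C_init :: "('p, 'n, 'r) negotiation \<Rightarrow> 'p \<Rightarrow> 'n set" where
  "C_init Ng = (\<lambda>p. {ninit Ng})"

definition is_final :: "('p, 'n, 'r) negotiation \<Rightarrow> ('p \<Rightarrow> 'n set) \<Rightarrow> bool" where
  "is_final Ng C \<longleftrightarrow> (\<forall>p\<in>Proc Ng. C p = {nfin Ng})"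

definition enabled :: "('p, 'n, 'r) negotiation \<Rightarrow> ('p \<Rightarrow> 'n set) \<Rightarrow> 'n \<Rightarrow> bool" where
  "enabled Ng C n \<longleftrightarrow> n \<in> Nodes Ng \<and> (\<forall>p\<in>ndom Ng n. n \<in> C p)"

definition step :: "('p, 'n, 'r) negotiation \<Rightarrow> ('p \<Rightarrow> 'n set) \<Rightarrow> 'n \<Rightarrow> 'r \<Rightarrow> ('p \<Rightarrow> 'n set) \<Rightarrow> bool" where
  "step Ng C n a C' \<longleftrightarrow> enabled Ng C n \<and> a \<in> out Ng n \<and>
     C' = (\<lambda>p. if p \<in> ndom Ng n then delta Ng n a p else C p)"

definition step_any :: "('p, 'n, 'r) negotiation \<Rightarrow> ('p \<Rightarrow> 'n set) \<Rightarrow> ('p \<Rightarrow> 'n set) \<Rightarrow> bool" where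
  "step_any Ng C C' \<longleftrightarrow> (\<exists>n a. step Ng C n a C')"

definition sound :: "('p, 'n, 'r) negotiation \<Rightarrow> bool" where
  "sound Ng \<longleftrightarrow> (\<forall>C. (step_any Ng)\<^sup>*\<^sup>* (C_init Ng) C \<longrightarrow>
       (\<exists>C'. (step_any Ng)\<^sup>*\<^sup>* C C' \<and> is_final Ng C'))"

definition is_edge :: "('p, 'n, 'r) negotiation \<Rightarrow> 'n \<Rightarrow> 'p \<Rightarrow> 'r \<Rightarrow> 'n \<Rightarrow> bool" where
  "is_edge Ng n p a n' \<longleftrightarrow> n \<in> Nodes Ng \<and> a \<in> out Ng n \<and> p \<in> ndom Ng n \<and> n' \<in> delta Ng n a p"

definition path_P :: "('p, 'n, 'r) negotiation \<Rightarrow> ('p \<Rightarrow> bool) \<Rightarrow> 'n list \<Rightarrow> bool" where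
  "path_P Ng P xs \<longleftrightarrow> xs \<noteq> [] \<and> set xs \<subseteq> Nodes Ng \<and>
     (\<forall>i. Suc i < length xs \<longrightarrow> (\<exists>p a. P p \<and> is_edge Ng (xs ! i) p a (xs ! Suc i)))"

definition local_path :: "('p, 'n, 'r) negotiation \<Rightarrow> 'n list \<Rightarrow> bool" where
  "local_path Ng xs \<longleftrightarrow> path_P Ng (\<lambda>_. True) xs"

definition proc_path :: "('p, 'n, 'r) negotiation \<Rightarrow> 'p \<Rightarrow> 'n list \<Rightarrow> bool" where
  "proc_path Ng p xs \<longleftrightarrow> path_P Ng (\<lambda>q. q = p) xs"

definition local_circuit :: "('p, 'n, 'r) negotiation \<Rightarrow> 'n list \<Rightarrow> bool" where
  "local_circuit Ng xs \<longleftrightarrow> local_path Ng xs \<and> length xs \<ge> 2 \<and> hd xs = last xs"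

definition dominates :: "('p, 'n, 'r) negotiation \<Rightarrow> 'n \<Rightarrow> 'n list \<Rightarrow> bool" where
  "dominates Ng n xs \<longleftrightarrow> n \<in> set xs \<and> (\<forall>m\<in>set xs. ndom Ng m \<subseteq> ndom Ng n)"

definition is_fork :: "('p, 'n, 'r) negotiation \<Rightarrow> 'p \<Rightarrow> 'p \<Rightarrow> 'n \<Rightarrow> 'n \<Rightarrow> bool" where
  "is_fork Ng p1 p2 n1 n2 \<longleftrightarrow>
     (\<exists>n a pi pi1 pi2. local_path Ng pi \<and> hd pi = ninit Ng \<and> last pi = n \<and>
        a \<in> out Ng n \<and>
        p1 \<in> ndom Ng n \<inter> ndom Ng n1 \<and> p2 \<in> ndom Ng n \<inter> ndom Ng n2 \<and>
        proc_path Ng p1 pi1 \<and> hd pi1 = dsucc Ng n a p1 \<and> last pi1 = n1 \<and>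
        proc_path Ng p2 pi2 \<and> hd pi2 = dsucc Ng n a p2 \<and> last pi2 = n2 \<and>
        set pi1 \<inter> set pi2 = {})"

definition antipattern_B :: "('p, 'n, 'r) negotiation \<Rightarrow> bool" where
  "antipattern_B Ng \<longleftrightarrow> (\<exists>p\<in>Proc Ng. \<exists>pi n. proc_path Ng p pi \<and> hd pi = ninit Ng \<and>
      last pi = n \<and> \<not> (\<exists>pi'. proc_path Ng p pi' \<and> hd pi' = n \<and> last pi' = nfin Ng))"

definition antipattern_F :: "('p, 'n, 'r) negotiation \<Rightarrow> bool" where
  "antipattern_F Ng \<longleftrightarrow> (\<exists>p1 p2 n1 n2. is_fork Ng p1 p2 n1 n2 \<and>
      p2 \<in> ndom Ng n1 \<and> p1 \<in> ndom Ng n2)"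

definition antipattern_C :: "('p, 'n, 'r) negotiation \<Rightarrow> bool" where
  "antipattern_C Ng \<longleftrightarrow> (\<exists>pi. local_circuit Ng pi \<and> \<not> (\<exists>n. dominates Ng n pi))"

end

theory Submission
  imports Defs "HOL-Library.FuncSet"
begin

lemma path_P_single: "path_P Ng P [x] \<longleftrightarrow> x \<in> Nodes Ng"
  by (simp add: path_P_def)

lemma path_P_Cons2:
  "path_P Ng P (x # y # zs) \<longleftrightarrow>
     x \<in> Nodes Ng \<and> (\<exists>p a. P p \<and> is_edge Ng x p a y) \<and> path_P Ng P (y # zs)"
proof
  assume h: "path_P Ng P (x # y # zs)"
  then have "\<exists>p a. P p \<and> is_edge Ng x p a y"
    unfolding path_P_def by (metis Suc_less_eq length_Cons nth_Cons_0 nth_Cons_Suc zero_less_Suc)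
  moreover have "path_P Ng P (y # zs)"
    unfolding path_P_def
  proof (intro conjI allI impI)
    show "y # zs \<noteq> []" by simp
    show "set (y # zs) \<subseteq> Nodes Ng" using h by (auto simp: path_P_def)
    fix i assume "Suc i < length (y # zs)"
    then have "Suc (Suc i) < length (x # y # zs)" by simp
    then show "\<exists>p a. P p \<and> is_edge Ng ((y # zs) ! i) p a ((y # zs) ! Suc i)"
      using h unfolding path_P_def by (metis nth_Cons_Suc)
  qed
  ultimately show "x \<in> Nodes Ng \<and> (\<exists>p a. P p \<and> is_edge Ng x p a y) \<and> path_P Ng P (y # zs)"
    using h by (auto simp: path_P_def)
next
  assume h: "x \<in> Nodes Ng \<and> (\<exists>p a. P p \<and> is_edge Ng x p a y) \<and> path_P Ng P (y # zs)"
  show "path_P Ng P (x # y # zs)"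
    unfolding path_P_def
  proof (intro conjI allI impI)
    show "x # y # zs \<noteq> []" by simp
    show "set (x # y # zs) \<subseteq> Nodes Ng" using h by (auto simp: path_P_def)
    fix i assume i: "Suc i < length (x # y # zs)"
    show "\<exists>p a. P p \<and> is_edge Ng ((x # y # zs) ! i) p a ((x # y # zs) ! Suc i)"
    proof (cases i)
      case 0 then show ?thesis using h by simp
    next
      case (Suc j)
      then have "Suc j < length (y # zs)" using i by simp
      then show ?thesis using h Suc unfolding path_P_def by (metis nth_Cons_Suc)
    qed
  qed
qed

lemma path_P_append:
  "path_P Ng P xs \<Longrightarrow> path_P Ng P ys \<Longrightarrow> last xs = hd ys \<Longrightarrow> path_P Ng P (xs @ tl ys)"
proof (induction xs rule: induct_list012)
  case 1 then show ?case by (simp add: path_P_def)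
next
  case (2 x) then show ?case by (cases ys) (auto simp: path_P_def)
next
  case (3 x y zs)
  then have "path_P Ng P (y # zs @ tl ys)" by (simp add: path_P_Cons2)
  then show ?case using 3 by (simp add: path_P_Cons2)
qed

lemma path_P_mono: "path_P Ng P xs \<Longrightarrow> (\<And>p. P p \<Longrightarrow> Q p) \<Longrightarrow> path_P Ng Q xs"
  unfolding path_P_def by blast

lemma proc_local: "proc_path Ng p xs \<Longrightarrow> local_path Ng xs"
  unfolding proc_path_def local_path_def by (erule path_P_mono) simp

lemma path_P_take: "path_P Ng P xs \<Longrightarrow> 0 < n \<Longrightarrow> path_P Ng P (take n xs)"
  unfolding path_P_def
  apply (intro conjI allI impI)
    apply simp
   apply (meson order_trans set_take_subset)
  apply simp
  done

lemma path_P_ne: "path_P Ng P xs \<Longrightarrow> xs \<noteq> []"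
  by (simp add: path_P_def)

lemma last_append_tl: "ys \<noteq> [] \<Longrightarrow> last xs = hd ys \<Longrightarrow> xs \<noteq> [] \<Longrightarrow> last (xs @ tl ys) = last ys"
  by (cases ys) auto

lemma set_append_tl: "xs \<noteq> [] \<Longrightarrow> ys \<noteq> [] \<Longrightarrow> last xs = hd ys \<Longrightarrow> set (xs @ tl ys) = set xs \<union> set ys"
  by (cases ys) auto

lemma set_butlast_last: "xs \<noteq> [] \<Longrightarrow> set xs = insert (last xs) (set (butlast xs))"
  by (metis append_butlast_last_id insert_is_Un list.set(2) set_append sup_commute empty_set)

lemma butlast_append_tl: "xs \<noteq> [] \<Longrightarrow> ys \<noteq> [] \<Longrightarrow> last xs = hd ys \<Longrightarrow>
   set (butlast (xs @ tl ys)) \<subseteq> set (butlast xs) \<union> set (butlast ys)"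
proof (cases ys)
  case (Cons y ys')
  assume a: "xs \<noteq> []" "last xs = hd ys"
  show ?thesis
  proof (cases "ys' = []")
    case True then show ?thesis using Cons by simp
  next
    case False
    then have "butlast (xs @ tl ys) = xs @ butlast ys'" using Cons by (simp add: butlast_append)
    moreover have "set xs \<subseteq> insert y (set (butlast xs))" using set_butlast_last[OF a(1)] a Cons by auto
    moreover have "butlast ys = y # butlast ys'" using Cons False by simp
    ultimately show ?thesis by auto
  qed
qed simp

lemma hd_in_butlast: "2 \<le> length ys \<Longrightarrow> hd ys \<in> set (butlast ys)"
  by (cases ys) auto

definition inv1 :: "('p, 'n, 'r) negotiation \<Rightarrow> ('p \<Rightarrow> 'n set) \<Rightarrow> bool" where
  "inv1 Ng X \<longleftrightarrow> (\<forall>p. p \<notin> Proc Ng \<longrightarrow> X p = {ninit Ng}) \<and>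
     (\<forall>p\<in>Proc Ng. \<exists>x. X p = {x} \<and> x \<in> Nodes Ng \<and> p \<in> ndom Ng x \<and>
        (\<exists>pi. proc_path Ng p pi \<and> hd pi = ninit Ng \<and> last pi = x))"

definition hist :: "('p, 'n, 'r) negotiation \<Rightarrow> ('p \<Rightarrow> 'n set) \<Rightarrow> 'p \<Rightarrow> 'p \<Rightarrow> bool" where
  "hist Ng X p q \<longleftrightarrow> (\<exists>n a pii pi1 pi2 x1 x2. X p = {x1} \<and> X q = {x2} \<and>
     local_path Ng pii \<and> hd pii = ninit Ng \<and> last pii = n \<and> a \<in> out Ng n \<and>
     p \<in> ndom Ng n \<and> q \<in> ndom Ng n \<and>
     proc_path Ng p pi1 \<and> hd pi1 = dsucc Ng n a p \<and> last pi1 = x1 \<and>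
     (\<forall>y\<in>set (butlast pi1). q \<notin> ndom Ng y) \<and>
     proc_path Ng q pi2 \<and> hd pi2 = dsucc Ng n a q \<and> last pi2 = x2 \<and>
     (\<forall>y\<in>set (butlast pi2). p \<notin> ndom Ng y))"

definition inv2 :: "('p, 'n, 'r) negotiation \<Rightarrow> ('p \<Rightarrow> 'n set) \<Rightarrow> bool" where
  "inv2 Ng X \<longleftrightarrow> (\<forall>p\<in>Proc Ng. \<forall>q\<in>Proc Ng. X p \<noteq> X q \<longrightarrow> hist Ng X p q)"

context
  fixes Ng :: "('p, 'n, 'r) negotiation"
  assumes neg: "is_negotiation Ng" and det: "deterministic Ng"
begin

lemma edge_dom: "is_edge Ng x p a y \<Longrightarrow> p \<in> ndom Ng y \<and> y \<in> Nodes Ng"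
  using neg unfolding is_negotiation_def is_edge_def by blast

lemma delta_single: "n \<in> Nodes Ng \<Longrightarrow> a \<in> out Ng n \<Longrightarrow> p \<in> ndom Ng n \<Longrightarrow>
    delta Ng n a p = {dsucc Ng n a p}"
  using det unfolding deterministic_def dsucc_def by fastforce

lemma dsucc_edge: "n \<in> Nodes Ng \<Longrightarrow> a \<in> out Ng n \<Longrightarrow> p \<in> ndom Ng n \<Longrightarrow>
    is_edge Ng n p a (dsucc Ng n a p)"
  using delta_single unfolding is_edge_def by blast

lemma edge_eq: "is_edge Ng x p a y \<Longrightarrow> y = dsucc Ng x a p"
  using delta_single unfolding is_edge_def by blast

lemma dom_sub: "n \<in> Nodes Ng \<Longrightarrow> ndom Ng n \<subseteq> Proc Ng"
  using neg unfolding is_negotiation_def by blast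

lemma proc_path_dom:
  "proc_path Ng p xs \<Longrightarrow> p \<in> ndom Ng (hd xs) \<Longrightarrow> x \<in> set xs \<Longrightarrow> p \<in> ndom Ng x"
proof (induction xs rule: induct_list012)
  case 1 then show ?case by simp
next
  case (2 y) then show ?case by simp
next
  case (3 y z zs)
  then have e: "\<exists>a. is_edge Ng y p a z" and pz: "proc_path Ng p (z # zs)"
    unfolding proc_path_def by (auto simp: path_P_Cons2)
  then have "p \<in> ndom Ng z" using edge_dom by blast
  then show ?case using 3 pz by auto
qed

lemma proc_path_snoc:
  assumes "proc_path Ng p pi" "last pi = m" "is_edge Ng m p b y"
  shows "proc_path Ng p (pi @ [y]) \<and> hd (pi @ [y]) = hd pi \<and> last (pi @ [y]) = y"
proof -
  have "proc_path Ng p [m, y]"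
    using assms(3) edge_dom[OF assms(3)] unfolding proc_path_def
    by (auto simp: path_P_Cons2 path_P_single is_edge_def)
  then have "proc_path Ng p (pi @ tl [m, y])"
    using assms path_P_append unfolding proc_path_def by fastforce
  moreover have "pi \<noteq> []" using assms(1) path_P_ne unfolding proc_path_def by blast
  ultimately show ?thesis by simp
qed

lemma inv1_init: "inv1 Ng (C_init Ng)"
  using neg unfolding inv1_def C_init_def is_negotiation_def proc_path_def
  by (auto intro!: exI[of _ "[ninit Ng]"] simp: path_P_single)

lemma inv2_init: "inv2 Ng (C_init Ng)"
  unfolding inv2_def C_init_def by simp

lemma step_facts:
  assumes "step Ng X m b X'"
  shows "m \<in> Nodes Ng" "b \<in> out Ng m" "\<And>p. p \<in> ndom Ng m \<Longrightarrow> m \<in> X p"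
    "\<And>p. p \<in> ndom Ng m \<Longrightarrow> X' p = {dsucc Ng m b p}"
    "\<And>p. p \<notin> ndom Ng m \<Longrightarrow> X' p = X p"
  using assms delta_single unfolding step_def enabled_def by auto

lemma inv1_step:
  assumes i: "inv1 Ng X" and s: "step Ng X m b X'"
  shows "inv1 Ng X'"
  unfolding inv1_def
proof (intro conjI allI ballI impI)
  fix p assume "p \<notin> Proc Ng"
  then have "p \<notin> ndom Ng m" using dom_sub step_facts(1)[OF s] by blast
  then show "X' p = {ninit Ng}" using step_facts(5)[OF s] i \<open>p \<notin> Proc Ng\<close> unfolding inv1_def by auto
next
  fix p assume p: "p \<in> Proc Ng"
  show "\<exists>x. X' p = {x} \<and> x \<in> Nodes Ng \<and> p \<in> ndom Ng x \<and>
        (\<exists>pi. proc_path Ng p pi \<and> hd pi = ninit Ng \<and> last pi = x)"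
  proof (cases "p \<in> ndom Ng m")
    case False then show ?thesis using step_facts(5)[OF s] i p unfolding inv1_def by auto
  next
    case True
    obtain x pi where x: "X p = {x}" "proc_path Ng p pi" "hd pi = ninit Ng" "last pi = x"
      using i p unfolding inv1_def by blast
    have "x = m" using x step_facts(3)[OF s True] by auto
    have e: "is_edge Ng m p b (dsucc Ng m b p)"
      using dsucc_edge step_facts(1,2)[OF s] True by blast
    show ?thesis
      using proc_path_snoc[OF x(2) _ e] x \<open>x = m\<close> edge_dom[OF e] step_facts(4)[OF s True]
      by metis
  qed
qed

lemma hist_cong: "hist Ng X p q \<Longrightarrow> Y p = X p \<Longrightarrow> Y q = X q \<Longrightarrow> hist Ng Y p q"
  unfolding hist_def by simp

lemma inv2_step:
  assumes i: "inv1 Ng X" and i2: "inv2 Ng X" and s: "step Ng X m b X'"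
  shows "inv2 Ng X'"
  unfolding inv2_def
proof (intro ballI impI)
  fix p q assume p: "p \<in> Proc Ng" and q: "q \<in> Proc Ng" and ne: "X' p \<noteq> X' q"
  obtain xp pip where xp: "X p = {xp}" "xp \<in> Nodes Ng" "p \<in> ndom Ng xp" "proc_path Ng p pip"
      "hd pip = ninit Ng" "last pip = xp"
    using i p unfolding inv1_def by blast
  obtain xq piq where xq: "X q = {xq}" "xq \<in> Nodes Ng" "q \<in> ndom Ng xq" "proc_path Ng q piq"
      "hd piq = ninit Ng" "last piq = xq"
    using i q unfolding inv1_def by blast
  have mN: "m \<in> Nodes Ng" and bo: "b \<in> out Ng m" using step_facts[OF s] by auto
  show "hist Ng X' p q"
  proof (cases "p \<in> ndom Ng m")
    case pm: True
    have "xp = m" using xp step_facts(3)[OF s pm] by auto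
    show ?thesis
    proof (cases "q \<in> ndom Ng m")
      case qm: True
      have n1: "dsucc Ng m b p \<in> Nodes Ng" "dsucc Ng m b q \<in> Nodes Ng"
        using edge_dom dsucc_edge mN bo pm qm by blast+
      show ?thesis unfolding hist_def
        apply (rule exI[of _ m], rule exI[of _ b], rule exI[of _ pip],
               rule exI[of _ "[dsucc Ng m b p]"], rule exI[of _ "[dsucc Ng m b q]"])
        using step_facts(4)[OF s pm] step_facts(4)[OF s qm] proc_local[OF xp(4)] xp \<open>xp = m\<close>
          bo pm qm n1
        by (simp add: proc_path_def path_P_single)
    next
      case qm: False
      have "xq \<noteq> m" using xq(3) qm by auto
      then have "X p \<noteq> X q" using xp xq \<open>xp = m\<close> by auto
      then have h: "hist Ng X p q" using i2 p q unfolding inv2_def by blast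
      then obtain n a pii pi1 pi2 where H: "local_path Ng pii" "hd pii = ninit Ng" "last pii = n"
        "a \<in> out Ng n" "p \<in> ndom Ng n" "q \<in> ndom Ng n"
        "proc_path Ng p pi1" "hd pi1 = dsucc Ng n a p" "last pi1 = xp"
        "\<forall>y\<in>set (butlast pi1). q \<notin> ndom Ng y"
        "proc_path Ng q pi2" "hd pi2 = dsucc Ng n a q" "last pi2 = xq"
        "\<forall>y\<in>set (butlast pi2). p \<notin> ndom Ng y"
        unfolding hist_def using xp(1) xq(1) by auto
      have e: "is_edge Ng m p b (dsucc Ng m b p)" using dsucc_edge mN bo pm by blast
      have P1: "proc_path Ng p (pi1 @ [dsucc Ng m b p])" "hd (pi1 @ [dsucc Ng m b p]) = hd pi1"
        "last (pi1 @ [dsucc Ng m b p]) = dsucc Ng m b p"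
        using proc_path_snoc[OF H(7) _ e] H(9) \<open>xp = m\<close> by auto
      have ne1: "pi1 \<noteq> []" using H(7) path_P_ne unfolding proc_path_def by blast
      have "\<forall>y\<in>set pi1. q \<notin> ndom Ng y"
        using H(10) H(9) \<open>xp = m\<close> qm set_butlast_last[OF ne1] by auto
      then show ?thesis unfolding hist_def
        apply (rule_tac exI[of _ n], rule_tac exI[of _ a], rule_tac exI[of _ pii],
               rule_tac exI[of _ "pi1 @ [dsucc Ng m b p]"], rule_tac exI[of _ pi2])
        using step_facts(4)[OF s pm] step_facts(5)[OF s qm] H P1 xq(1) by simp
    qed
  next
    case pm: False
    show ?thesis
    proof (cases "q \<in> ndom Ng m")
      case qm: True
      have "xq = m" using xq step_facts(3)[OF s qm] by auto
      have "xp \<noteq> m" using xp(3) pm by auto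
      then have "X p \<noteq> X q" using xp xq \<open>xq = m\<close> by auto
      then have h: "hist Ng X p q" using i2 p q unfolding inv2_def by blast
      then obtain n a pii pi1 pi2 where H: "local_path Ng pii" "hd pii = ninit Ng" "last pii = n"
        "a \<in> out Ng n" "p \<in> ndom Ng n" "q \<in> ndom Ng n"
        "proc_path Ng p pi1" "hd pi1 = dsucc Ng n a p" "last pi1 = xp"
        "\<forall>y\<in>set (butlast pi1). q \<notin> ndom Ng y"
        "proc_path Ng q pi2" "hd pi2 = dsucc Ng n a q" "last pi2 = xq"
        "\<forall>y\<in>set (butlast pi2). p \<notin> ndom Ng y"
        unfolding hist_def using xp(1) xq(1) by auto
      have e: "is_edge Ng m q b (dsucc Ng m b q)" using dsucc_edge mN bo qm by blast
      have P2: "proc_path Ng q (pi2 @ [dsucc Ng m b q])" "hd (pi2 @ [dsucc Ng m b q]) = hd pi2"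
        "last (pi2 @ [dsucc Ng m b q]) = dsucc Ng m b q"
        using proc_path_snoc[OF H(11) _ e] H(13) \<open>xq = m\<close> by auto
      have ne2: "pi2 \<noteq> []" using H(11) path_P_ne unfolding proc_path_def by blast
      have "\<forall>y\<in>set pi2. p \<notin> ndom Ng y"
        using H(14) H(13) \<open>xq = m\<close> pm set_butlast_last[OF ne2] by auto
      then show ?thesis unfolding hist_def
        apply (rule_tac exI[of _ n], rule_tac exI[of _ a], rule_tac exI[of _ pii],
               rule_tac exI[of _ pi1], rule_tac exI[of _ "pi2 @ [dsucc Ng m b q]"])
        using step_facts(5)[OF s pm] step_facts(4)[OF s qm] H P2 xp(1) by simp
    next
      case qm: False
      have "X p \<noteq> X q" using ne step_facts(5)[OF s pm] step_facts(5)[OF s qm] by simp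
      then have "hist Ng X p q" using i2 p q unfolding inv2_def by blast
      then show ?thesis using hist_cong step_facts(5)[OF s pm] step_facts(5)[OF s qm] by blast
    qed
  qed
qed

lemma reach_inv: "(step_any Ng)\<^sup>*\<^sup>* (C_init Ng) X \<Longrightarrow> inv1 Ng X \<and> inv2 Ng X"
proof (induction rule: rtranclp_induct)
  case base then show ?case using inv1_init inv2_init by blast
next
  case (step Y Z)
  then obtain m b where "step Ng Y m b Z" unfolding step_any_def by blast
  then show ?case using inv1_step inv2_step step.IH by blast
qed


lemma finite_cfgs: "finite {X. inv1 Ng X}"
proof -
  let ?F = "\<lambda>f p. if p \<in> Proc Ng then {f p} else {ninit Ng}"
  have "{X. inv1 Ng X} \<subseteq> ?F ` (PiE (Proc Ng) (\<lambda>_. Nodes Ng))"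
  proof
    fix X assume "X \<in> {X. inv1 Ng X}"
    then have i: "inv1 Ng X" by simp
    let ?f = "restrict (\<lambda>p. the_elem (X p)) (Proc Ng)"
    have "\<forall>p\<in>Proc Ng. the_elem (X p) \<in> Nodes Ng \<and> X p = {the_elem (X p)}"
    proof
      fix p assume "p \<in> Proc Ng"
      then obtain x where "X p = {x}" "x \<in> Nodes Ng" using i unfolding inv1_def by blast
      then show "the_elem (X p) \<in> Nodes Ng \<and> X p = {the_elem (X p)}" by simp
    qed
    then have A: "?f \<in> PiE (Proc Ng) (\<lambda>_. Nodes Ng)" and B: "\<forall>p\<in>Proc Ng. X p = {?f p}"
      by (simp_all add: restrict_PiE_iff)
    have "X = ?F ?f"
    proof
      fix p show "X p = ?F ?f p"
        using B i unfolding inv1_def by (cases "p \<in> Proc Ng") simp_all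
    qed
    then show "X \<in> ?F ` (PiE (Proc Ng) (\<lambda>_. Nodes Ng))" by (rule image_eqI[OF _ A])
  qed
  moreover have "finite (PiE (Proc Ng) (\<lambda>_. Nodes Ng))"
    using neg by (simp add: finite_PiE is_negotiation_def)
  ultimately show ?thesis by (rule finite_subset[OF _ finite_imageI])
qed

lemma lemA:
  "(step_any Ng)\<^sup>*\<^sup>* X G \<Longrightarrow> step Ng G m b H \<Longrightarrow> p \<in> ndom Ng m \<Longrightarrow> X p = {x} \<Longrightarrow>
   \<exists>G'. (step_any Ng)\<^sup>*\<^sup>* X G' \<and> enabled Ng G' x \<and> G' p = {x}"
proof (induction arbitrary: x rule: converse_rtranclp_induct)
  case base
  then have "m \<in> G p" unfolding step_def enabled_def by blast
  then have "m = x" using base by simp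
  then show ?case using base unfolding step_def by auto
next
  case (step Y Z)
  obtain m' b' where s: "step Ng Y m' b' Z" using step.hyps(1) unfolding step_any_def by blast
  show ?case
  proof (cases "p \<in> ndom Ng m'")
    case True
    then have "m' \<in> Y p" using s unfolding step_def enabled_def by blast
    then have "m' = x" using step.prems by simp
    then show ?thesis using s step.prems unfolding step_def by auto
  next
    case False
    then have "Z p = {x}" using s step.prems unfolding step_def by auto
    then obtain G' where "(step_any Ng)\<^sup>*\<^sup>* Z G'" "enabled Ng G' x" "G' p = {x}"
      using step.IH step.prems by blast
    then show ?thesis using step.hyps(1) by (meson converse_rtranclp_into_rtranclp)
  qed
qed

lemma drive:
  assumes Q: "\<forall>E. (step_any Ng)\<^sup>*\<^sup>* D E \<longrightarrow> (step_any Ng)\<^sup>*\<^sup>* E D"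
    and s: "step Ng D m b E" and pm: "p \<in> ndom Ng m"
    and g: "proc_path Ng p g" "D p = {hd g}"
  shows "\<exists>F. (step_any Ng)\<^sup>*\<^sup>* D F \<and> F p = {last g}"
proof -
  have gne: "g \<noteq> []" using g(1) path_P_ne unfolding proc_path_def by blast
  have "i < length g \<longrightarrow> (\<exists>F. (step_any Ng)\<^sup>*\<^sup>* D F \<and> F p = {g ! i})" for i
  proof (induction i)
    case 0
    then show ?case using g(2) gne by (auto simp: hd_conv_nth)
  next
    case (Suc i)
    show ?case
    proof
      assume il: "Suc i < length g"
      then obtain F where F: "(step_any Ng)\<^sup>*\<^sup>* D F" "F p = {g ! i}" using Suc.IH by auto
      have "\<forall>j. Suc j < length g \<longrightarrow> (\<exists>q a. q = p \<and> is_edge Ng (g ! j) q a (g ! Suc j))"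
        using g(1) unfolding proc_path_def path_P_def by simp
      then obtain a where e: "is_edge Ng (g ! i) p a (g ! Suc i)"
        using il by blast
      have FD: "(step_any Ng)\<^sup>*\<^sup>* F D" using Q F(1) by blast
      obtain G' where G': "(step_any Ng)\<^sup>*\<^sup>* F G'" "enabled Ng G' (g ! i)"
        using lemA[OF FD s pm F(2)] by blast
      let ?G = "\<lambda>q. if q \<in> ndom Ng (g ! i) then delta Ng (g ! i) a q else G' q"
      have st: "step Ng G' (g ! i) a ?G" unfolding step_def using G'(2) e by (simp add: is_edge_def)
      have ep: "p \<in> ndom Ng (g ! i)" "g ! i \<in> Nodes Ng" "a \<in> out Ng (g ! i)"
        using e unfolding is_edge_def by auto
      have "?G p = {g ! Suc i}" using delta_single[OF ep(2,3,1)] edge_eq[OF e] ep(1) by simp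
      moreover have "(step_any Ng)\<^sup>*\<^sup>* D ?G"
      proof -
        have "step_any Ng G' ?G" unfolding step_any_def using st by blast
        then show ?thesis using rtranclp_trans[OF F(1) G'(1)] by (rule rtranclp.rtrancl_into_rtrancl[rotated])
      qed
      ultimately show "\<exists>F. (step_any Ng)\<^sup>*\<^sup>* D F \<and> F p = {g ! Suc i}" by blast
    qed
  qed
  moreover have "length g - 1 < length g" using gne by simp
  ultimately obtain F where "(step_any Ng)\<^sup>*\<^sup>* D F" "F p = {g ! (length g - 1)}" by blast
  then show ?thesis using last_conv_nth[OF gne] by auto
qed

lemma enabled_fin_final:
  assumes i: "inv1 Ng X" and e: "enabled Ng X (nfin Ng)" shows "is_final Ng X"
  unfolding is_final_def
proof
  fix p assume p: "p \<in> Proc Ng"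
  have "ndom Ng (nfin Ng) = Proc Ng" using neg unfolding is_negotiation_def by blast
  then have "nfin Ng \<in> X p" using e p unfolding enabled_def by blast
  moreover obtain x where "X p = {x}" using i p unfolding inv1_def by blast
  ultimately show "X p = {nfin Ng}" by simp
qed

lemma noB_path:
  "\<not> antipattern_B Ng \<Longrightarrow> p \<in> Proc Ng \<Longrightarrow> proc_path Ng p pi \<Longrightarrow> hd pi = ninit Ng \<Longrightarrow>
   \<exists>pi'. proc_path Ng p pi' \<and> hd pi' = last pi \<and> last pi' = nfin Ng"
  unfolding antipattern_B_def by blast

lemma deadlock_exists:
  assumes noB: "\<not> antipattern_B Ng" and ns: "\<not> sound Ng"
  shows "\<exists>D. (step_any Ng)\<^sup>*\<^sup>* (C_init Ng) D \<and> (\<forall>n. \<not> enabled Ng D n)"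
proof -
  obtain C0 where c0: "(step_any Ng)\<^sup>*\<^sup>* (C_init Ng) C0"
    and nf: "\<forall>C'. (step_any Ng)\<^sup>*\<^sup>* C0 C' \<longrightarrow> \<not> is_final Ng C'"
    using ns unfolding sound_def by blast
  define R where "R X = {Y. (step_any Ng)\<^sup>*\<^sup>* X Y}" for X
  have Rfin: "finite (R X)" if "(step_any Ng)\<^sup>*\<^sup>* (C_init Ng) X" for X
  proof -
    have "R X \<subseteq> {X. inv1 Ng X}"
      using that reach_inv unfolding R_def by (auto dest: rtranclp_trans)
    then show ?thesis using finite_cfgs finite_subset by blast
  qed
  obtain D where D: "D \<in> R C0" and Dmin: "\<forall>D'. D' \<in> R C0 \<longrightarrow> card (R D) \<le> card (R D')"
    using ex_has_least_nat[of "\<lambda>X. X \<in> R C0" C0 "\<lambda>X. card (R X)"] by (auto simp: R_def)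
  have DC: "(step_any Ng)\<^sup>*\<^sup>* C0 D" using D unfolding R_def by simp
  have Dreach: "(step_any Ng)\<^sup>*\<^sup>* (C_init Ng) D" using c0 DC by (rule rtranclp_trans)
  have i1: "\<And>X. (step_any Ng)\<^sup>*\<^sup>* D X \<Longrightarrow> inv1 Ng X"
    using reach_inv Dreach by (meson rtranclp_trans)
  have Q: "\<forall>E. (step_any Ng)\<^sup>*\<^sup>* D E \<longrightarrow> (step_any Ng)\<^sup>*\<^sup>* E D"
  proof (intro allI impI)
    fix E assume DE: "(step_any Ng)\<^sup>*\<^sup>* D E"
    then have sub: "R E \<subseteq> R D" unfolding R_def by (auto dest: rtranclp_trans)
    have "E \<in> R C0" using DC DE unfolding R_def by (auto dest: rtranclp_trans)
    then have "card (R D) \<le> card (R E)" using Dmin by blast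
    then have "R E = R D" using card_seteq[OF Rfin[OF Dreach] sub] by blast
    then show "(step_any Ng)\<^sup>*\<^sup>* E D" unfolding R_def by auto
  qed
  have "\<forall>n. \<not> enabled Ng D n"
  proof (intro allI notI)
    fix n assume en: "enabled Ng D n"
    show False
    proof (cases "n = nfin Ng")
      case True
      then have "is_final Ng D" using enabled_fin_final i1 en by blast
      then show False using nf DC by blast
    next
      case False
      have nN: "n \<in> Nodes Ng" using en unfolding enabled_def by blast
      then obtain b where b: "b \<in> out Ng n" using neg False unfolding is_negotiation_def by blast
      obtain p where pm: "p \<in> ndom Ng n" using neg nN unfolding is_negotiation_def by blast
      have pP: "p \<in> Proc Ng" using dom_sub nN pm by blast
      let ?E = "\<lambda>q. if q \<in> ndom Ng n then delta Ng n b q else D q"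
      have s: "step Ng D n b ?E" unfolding step_def using en b by simp
      obtain x pi where x: "D p = {x}" "proc_path Ng p pi" "hd pi = ninit Ng" "last pi = x"
        using i1[OF rtranclp.rtrancl_refl] pP unfolding inv1_def by blast
      obtain g where g: "proc_path Ng p g" "hd g = x" "last g = nfin Ng"
        using noB_path[OF noB pP x(2,3)] x(4) by blast
      obtain F where F: "(step_any Ng)\<^sup>*\<^sup>* D F" "F p = {nfin Ng}"
        using drive[OF Q s pm g(1)] g x(1) by auto
      have FD: "(step_any Ng)\<^sup>*\<^sup>* F D" using Q F(1) by blast
      obtain G' where G': "(step_any Ng)\<^sup>*\<^sup>* F G'" "enabled Ng G' (nfin Ng)"
        using lemA[OF FD s pm F(2)] by blast
      have DG: "(step_any Ng)\<^sup>*\<^sup>* D G'" using F(1) G'(1) by (rule rtranclp_trans)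
      then have "is_final Ng G'" using enabled_fin_final i1 G'(2) by blast
      moreover have "(step_any Ng)\<^sup>*\<^sup>* C0 G'" using DC DG by (rule rtranclp_trans)
      ultimately show False using nf by blast
    qed
  qed
  then show ?thesis using Dreach by blast
qed


lemma seg_or_fork:
  assumes noB: "\<not> antipattern_B Ng" and Dr: "(step_any Ng)\<^sup>*\<^sup>* (C_init Ng) D"
    and p: "p \<in> Proc Ng" and q: "q \<in> Proc Ng" and xp: "D p = {xp}" and xq: "D q = {xq}"
    and qxp: "q \<in> ndom Ng xp" and ne: "xq \<noteq> xp"
  shows "antipattern_F Ng \<or> (\<exists>s. proc_path Ng q s \<and> hd s = xq \<and> last s = xp \<and>
           (\<forall>y\<in>set (butlast s). p \<notin> ndom Ng y))"
proof -
  have i1: "inv1 Ng D" and i2: "inv2 Ng D" using reach_inv[OF Dr] by auto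
  obtain x pi where xq': "D q = {x}" "x \<in> Nodes Ng" "q \<in> ndom Ng x" "proc_path Ng q pi"
      "hd pi = ninit Ng" "last pi = x"
    using i1 q unfolding inv1_def by blast
  have "x = xq" using xq'(1) xq by simp
  obtain x' where xp': "D p = {x'}" "p \<in> ndom Ng x'"
    using i1 p unfolding inv1_def by blast
  have pxp: "p \<in> ndom Ng xp" using xp' xp by simp
  obtain g where g: "proc_path Ng q g" "hd g = xq" "last g = nfin Ng"
    using noB_path[OF noB q xq'(4,5)] xq'(6) \<open>x = xq\<close> by blast
  have gne: "g \<noteq> []" using g(1) path_P_ne unfolding proc_path_def by blast
  have domfin: "ndom Ng (nfin Ng) = Proc Ng" using neg unfolding is_negotiation_def by blast
  have ex: "\<exists>k. k < length g \<and> p \<in> ndom Ng (g ! k)"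
  proof (intro exI conjI)
    show "length g - 1 < length g" using gne by simp
    show "p \<in> ndom Ng (g ! (length g - 1))" using last_conv_nth[OF gne] g(3) domfin p by simp
  qed
  define k where "k = (LEAST k. k < length g \<and> p \<in> ndom Ng (g ! k))"
  have k: "k < length g" "p \<in> ndom Ng (g ! k)" using LeastI_ex[OF ex] unfolding k_def by auto
  have kmin: "p \<notin> ndom Ng (g ! j)" if "j < k" for j
    using not_less_Least[of j "\<lambda>k. k < length g \<and> p \<in> ndom Ng (g ! k)"] that k(1)
    unfolding k_def by auto
  define s where "s = take (Suc k) g"
  have s1: "proc_path Ng q s" using path_P_take g(1) unfolding proc_path_def s_def by blast
  have s2: "hd s = xq" using gne g(2) unfolding s_def by (cases g) auto
  have nes: "s \<noteq> []" using gne unfolding s_def by simp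
  have ls: "length s = Suc k" using k(1) unfolding s_def by simp
  have s3: "last s = g ! k" using last_conv_nth[OF nes] ls unfolding s_def by simp
  have s4: "\<forall>y\<in>set (butlast s). p \<notin> ndom Ng y"
  proof
    fix y assume "y \<in> set (butlast s)"
    then have "y \<in> set (take k g)" using k(1) unfolding s_def by (simp add: butlast_take)
    then obtain j where "j < length (take k g)" "y = take k g ! j" by (auto simp: in_set_conv_nth)
    then have "j < k" "y = g ! j" by auto
    then show "p \<notin> ndom Ng y" using kmin by simp
  qed
  show ?thesis
  proof (cases "g ! k = xp")
    case True then show ?thesis using s1 s2 s3 s4 by blast
  next
    case False
    have "D p \<noteq> D q" using xp xq ne by auto
    then have "hist Ng D p q" using i2 p q unfolding inv2_def by blast
    then obtain n a pii pi1 pi2 where H: "local_path Ng pii" "hd pii = ninit Ng" "last pii = n"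
        "a \<in> out Ng n" "p \<in> ndom Ng n" "q \<in> ndom Ng n"
        "proc_path Ng p pi1" "hd pi1 = dsucc Ng n a p" "last pi1 = xp"
        "\<forall>y\<in>set (butlast pi1). q \<notin> ndom Ng y"
        "proc_path Ng q pi2" "hd pi2 = dsucc Ng n a q" "last pi2 = xq"
        "\<forall>y\<in>set (butlast pi2). p \<notin> ndom Ng y"
      unfolding hist_def using xp xq by auto
    define pi2' where "pi2' = pi2 @ tl s"
    have ne2: "pi2 \<noteq> []" using H(11) path_P_ne unfolding proc_path_def by blast
    have ne1: "pi1 \<noteq> []" using H(7) path_P_ne unfolding proc_path_def by blast
    have L: "last pi2 = hd s" using H(13) s2 by simp
    have P2: "proc_path Ng q pi2'"
      using path_P_append[of Ng "\<lambda>r. r = q" pi2 s] H(11) s1 L unfolding proc_path_def pi2'_def by blast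
    have hd2: "hd pi2' = dsucc Ng n a q" using ne2 H(12) unfolding pi2'_def by simp
    have last2: "last pi2' = g ! k" using last_append_tl[OF nes L ne2] s3 unfolding pi2'_def by simp
    have bl2: "\<forall>y\<in>set (butlast pi2'). p \<notin> ndom Ng y"
      using butlast_append_tl[OF ne2 nes L] H(14) s4 unfolding pi2'_def by blast
    have ne2': "pi2' \<noteq> []" using ne2 unfolding pi2'_def by simp
    have piine: "pii \<noteq> []" using H(1) path_P_ne unfolding local_path_def by blast
    have nN: "n \<in> Nodes Ng" using H(1,3) last_in_set[OF piine] unfolding local_path_def path_P_def by blast
    have pd: "p \<in> ndom Ng (dsucc Ng n a p)" using edge_dom dsucc_edge nN H(4,5) by blast
    have allp: "\<forall>y\<in>set pi1. p \<in> ndom Ng y" using proc_path_dom[OF H(7)] H(8) pd by auto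
    have qk: "q \<in> ndom Ng (g ! k)"
      using proc_path_dom[OF g(1)] g(2) xq'(3) \<open>x = xq\<close> k(1) nth_mem by metis
    have disj: "set pi1 \<inter> set pi2' = {}"
    proof (rule ccontr)
      assume "set pi1 \<inter> set pi2' \<noteq> {}"
      then obtain y where y1: "y \<in> set pi1" and y2: "y \<in> set pi2'" by blast
      have "p \<in> ndom Ng y" using allp y1 by blast
      then have "y \<notin> set (butlast pi2')" using bl2 by blast
      then have yk: "y = g ! k" using y2 set_butlast_last[OF ne2'] last2 by auto
      then have "q \<in> ndom Ng y" using qk by simp
      then have "y \<notin> set (butlast pi1)" using H(10) by blast
      then have "y = xp" using y1 set_butlast_last[OF ne1] H(9) by auto
      then show False using yk False by simp
    qed
    have "is_fork Ng p q xp (g ! k)"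
      unfolding is_fork_def
      apply (rule exI[of _ n], rule exI[of _ a], rule exI[of _ pii], rule exI[of _ pi1],
             rule exI[of _ pi2'])
      using H P2 hd2 last2 disj qxp k(2) qk pxp by simp
    then have "antipattern_F Ng" unfolding antipattern_F_def using qxp k(2) by blast
    then show ?thesis by blast
  qed
qed


lemma cycle_contra:
  fixes d :: "'p \<Rightarrow> 'n" and nxt :: "'p \<Rightarrow> 'p" and seg :: "'p \<Rightarrow> 'n list"
  assumes noC: "\<not> antipattern_C Ng"
    and dP: "\<forall>p\<in>Proc Ng. d p \<in> Nodes Ng \<and> p \<in> ndom Ng (d p)"
    and nP: "\<forall>p\<in>Proc Ng. nxt p \<in> Proc Ng \<and> d (nxt p) \<noteq> d p"
    and sP: "\<forall>p\<in>Proc Ng. proc_path Ng (nxt p) (seg p) \<and> hd (seg p) = d (nxt p) \<and>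
               last (seg p) = d p \<and> (\<forall>y\<in>set (butlast (seg p)). p \<notin> ndom Ng y)"
  shows False
proof -
  have finP: "finite (Proc Ng)" using neg unfolding is_negotiation_def by blast
  have "ninit Ng \<in> Nodes Ng" "ndom Ng (ninit Ng) = Proc Ng" "ndom Ng (ninit Ng) \<noteq> {}"
    using neg unfolding is_negotiation_def by auto
  then obtain p0 where p0: "p0 \<in> Proc Ng" by blast
  define ch where "ch k = (nxt ^^ k) p0" for k
  have chS: "ch (Suc k) = nxt (ch k)" for k unfolding ch_def by simp
  have chP: "ch k \<in> Proc Ng" for k
  proof (induction k)
    case 0 then show ?case using p0 unfolding ch_def by simp
  next
    case (Suc k) then show ?case using nP chS by simp
  qed
  have "\<not> inj ch"
  proof
    assume inj: "inj ch"
    have "range ch \<subseteq> Proc Ng" using chP by blast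
    then have "finite (range ch)" using finP finite_subset by blast
    then have "finite (UNIV :: nat set)" using finite_imageD[OF _ inj] by blast
    then show False by simp
  qed
  then obtain i0 j0 where "ch i0 = ch j0" "i0 \<noteq> j0" unfolding inj_def by blast
  then obtain i j where ij: "i < j" "ch i = ch j"
    by (metis linorder_neqE_nat)
  define L where "L = j - i"
  define c where "c k = ch (i + k)" for k
  have cP: "c k \<in> Proc Ng" for k unfolding c_def using chP by simp
  have cS: "c (Suc k) = nxt (c k)" for k unfolding c_def using chS by simp
  have cL: "c L = c 0" using ij unfolding c_def L_def by simp
  have L1: "1 \<le> L" using ij unfolding L_def by simp
  define sg where "sg k = seg (c k)" for k
  have sg1: "proc_path Ng (c (Suc k)) (sg k)" for k using sP cP cS unfolding sg_def by simp
  have sg2: "hd (sg k) = d (c (Suc k))" for k using sP cP cS unfolding sg_def by simp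
  have sg3: "last (sg k) = d (c k)" for k using sP cP unfolding sg_def by simp
  have sg4: "\<forall>y\<in>set (butlast (sg k)). c k \<notin> ndom Ng y" for k using sP cP unfolding sg_def by simp
  have sgne: "sg k \<noteq> []" for k using sg1 path_P_ne unfolding proc_path_def by blast
  have dne: "d (c (Suc k)) \<noteq> d (c k)" for k using nP cP cS by simp
  have sglen: "2 \<le> length (sg k)" for k
  proof (rule ccontr)
    assume "\<not> 2 \<le> length (sg k)"
    then have "length (sg k) = 1" using sgne[of k] by (cases "sg k") (auto simp: Suc_le_eq)
    then obtain y where "sg k = [y]" by (auto simp: length_Suc_conv)
    then show False using sg2[of k] sg3[of k] dne[of k] by simp
  qed
  have circ: "\<exists>xs. local_path Ng xs \<and> hd xs = d (c t) \<and> last xs = d (c 0) \<and> Suc t \<le> length xs \<and>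
      set xs \<subseteq> insert (d (c 0)) (\<Union>k\<in>{..<t}. set (sg k)) \<and> (\<forall>k\<le>t. d (c k) \<in> set xs)" for t
  proof (induction t)
    case 0
    have "local_path Ng [d (c 0)]" using dP cP unfolding local_path_def by (simp add: path_P_single)
    then show ?case by (intro exI[of _ "[d (c 0)]"]) auto
  next
    case (Suc t)
    then obtain xs where xs: "local_path Ng xs" "hd xs = d (c t)" "last xs = d (c 0)"
      "Suc t \<le> length xs" "set xs \<subseteq> insert (d (c 0)) (\<Union>k\<in>{..<t}. set (sg k))"
      "\<forall>k\<le>t. d (c k) \<in> set xs" by blast
    define ys where "ys = sg t @ tl xs"
    have xne: "xs \<noteq> []" using xs(1) path_P_ne unfolding local_path_def by blast
    have Lk: "last (sg t) = hd xs" using sg3 xs(2) by simp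
    have y1: "local_path Ng ys"
      using path_P_append[of Ng "\<lambda>_. True" "sg t" xs] proc_local[OF sg1[of t]] xs(1) Lk
      unfolding local_path_def ys_def by blast
    have y2: "hd ys = d (c (Suc t))" using sgne sg2 unfolding ys_def by simp
    have y3: "last ys = d (c 0)" using last_append_tl[OF xne Lk sgne[of t]] xs(3) unfolding ys_def by simp
    have y4: "Suc (Suc t) \<le> length ys" using sglen[of t] xs(4) unfolding ys_def by simp
    have ys_set: "set ys = set (sg t) \<union> set xs" using set_append_tl[OF sgne[of t] xne Lk] unfolding ys_def .
    have y5: "set ys \<subseteq> insert (d (c 0)) (\<Union>k\<in>{..<Suc t}. set (sg k))"
      using ys_set xs(5) by (auto simp: lessThan_Suc)
    have hin: "hd (sg t) \<in> set (sg t)" using sgne[of t] by simp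
    have y6: "\<forall>k\<le>Suc t. d (c k) \<in> set ys"
    proof (intro allI impI)
      fix k assume "k \<le> Suc t"
      then consider "k = Suc t" | "k \<le> t" by linarith
      then show "d (c k) \<in> set ys"
      proof cases
        case 1 then show ?thesis using hin sg2 ys_set by auto
      next
        case 2 then show ?thesis using xs(6) ys_set by auto
      qed
    qed
    show ?case using y1 y2 y3 y4 y5 y6 by blast
  qed
  obtain xs where xs: "local_path Ng xs" "hd xs = d (c L)" "last xs = d (c 0)" "Suc L \<le> length xs"
      "set xs \<subseteq> insert (d (c 0)) (\<Union>k\<in>{..<L}. set (sg k))" "\<forall>k\<le>L. d (c k) \<in> set xs"
    using circ[of L] by blast
  have "local_circuit Ng xs" unfolding local_circuit_def using xs(1-4) cL L1 by simp
  then obtain m where "dominates Ng m xs" using noC unfolding antipattern_C_def by blast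
  then have mx: "m \<in> set xs" and dm: "\<forall>y\<in>set xs. ndom Ng y \<subseteq> ndom Ng m"
    unfolding dominates_def by auto
  have cin: "c k \<in> ndom Ng m" if "k \<le> L" for k
    using xs(6) that dm dP cP by blast
  have d0: "d (c 0) \<in> set (sg 0)" using sg3[of 0] sgne[of 0] last_in_set by metis
  obtain k where k: "k < L" "m \<in> set (sg k)"
  proof (cases "m = d (c 0)")
    case True then show ?thesis using that[of 0] d0 L1 by simp
  next
    case False then show ?thesis using that mx xs(5) by blast
  qed
  have "m \<notin> set (butlast (sg k))" using sg4[of k] cin[of k] k(1) by auto
  then have mk: "m = d (c k)" using k(2) set_butlast_last[OF sgne[of k]] sg3[of k] by auto
  define k' where "k' = (if k = 0 then L else k)"
  have k': "0 < k'" "k' \<le> L" "d (c k') = m" using L1 k(1) mk cL unfolding k'_def by auto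
  then obtain k'' where k'': "k' = Suc k''" by (cases k') auto
  have "hd (sg k'') = m" using sg2[of k''] k'' k'(3) by simp
  then have "m \<in> set (butlast (sg k''))" using hd_in_butlast[OF sglen[of k'']] by simp
  then have "c k'' \<notin> ndom Ng m" using sg4[of k''] by blast
  moreover have "c k'' \<in> ndom Ng m" using cin k'' k'(2) by simp
  ultimately show False by blast
qed

end

theorem lemma3p10:
  fixes Ng :: "('p, 'n, 'r) negotiation"
  assumes "is_negotiation Ng"
    and "deterministic Ng"
    and "\<not> sound Ng"
  shows "antipattern_B Ng \<or> antipattern_F Ng \<or> antipattern_C Ng"
proof (rule ccontr)
  assume "\<not> (antipattern_B Ng \<or> antipattern_F Ng \<or> antipattern_C Ng)"
  then have noB: "\<not> antipattern_B Ng" and noF: "\<not> antipattern_F Ng" and noC: "\<not> antipattern_C Ng"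
    by auto
  note neg = assms(1) and det = assms(2)
  obtain D where Dr: "(step_any Ng)\<^sup>*\<^sup>* (C_init Ng) D" and dl: "\<forall>n. \<not> enabled Ng D n"
    using deadlock_exists[OF neg det noB assms(3)] by blast
  have i1: "inv1 Ng D" using reach_inv[OF neg det Dr] by blast
  define d where "d p = the_elem (D p)" for p
  have dD: "\<forall>p\<in>Proc Ng. D p = {d p} \<and> d p \<in> Nodes Ng \<and> p \<in> ndom Ng (d p)"
  proof
    fix p assume "p \<in> Proc Ng"
    then obtain x where "D p = {x}" "x \<in> Nodes Ng" "p \<in> ndom Ng x" using i1 unfolding inv1_def by blast
    then show "D p = {d p} \<and> d p \<in> Nodes Ng \<and> p \<in> ndom Ng (d p)" unfolding d_def by simp
  qed
  define Q where "Q p q s \<longleftrightarrow> q \<in> Proc Ng \<and> d q \<noteq> d p \<and> proc_path Ng q s \<and> hd s = d q \<and>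
      last s = d p \<and> (\<forall>y\<in>set (butlast s). p \<notin> ndom Ng y)" for p q s
  have wait: "\<exists>q s. Q p q s" if p: "p \<in> Proc Ng" for p
  proof -
    have "\<not> enabled Ng D (d p)" using dl by blast
    then obtain q where q: "q \<in> ndom Ng (d p)" "d p \<notin> D q" using dD p unfolding enabled_def by blast
    have qP: "q \<in> Proc Ng" using dom_sub[OF neg det] dD p q(1) by blast
    have dq: "d q \<noteq> d p" using q(2) dD qP by auto
    have "D p = {d p}" "D q = {d q}" using dD p qP by auto
    from seg_or_fork[OF neg det noB Dr p qP this q(1) dq] noF
    show ?thesis unfolding Q_def using qP dq by blast
  qed
  define nxt where "nxt p = (SOME q. \<exists>s. Q p q s)" for p
  define seg where "seg p = (SOME s. Q p (nxt p) s)" for p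
  have Qs: "Q p (nxt p) (seg p)" if "p \<in> Proc Ng" for p
  proof -
    have "\<exists>s. Q p (nxt p) s" unfolding nxt_def using someI_ex[OF wait[OF that]] .
    then show ?thesis unfolding seg_def by (rule someI_ex)
  qed
  show False
  proof (rule cycle_contra[OF neg det noC, of d nxt seg])
    show "\<forall>p\<in>Proc Ng. d p \<in> Nodes Ng \<and> p \<in> ndom Ng (d p)" using dD by blast
    show "\<forall>p\<in>Proc Ng. nxt p \<in> Proc Ng \<and> d (nxt p) \<noteq> d p" using Qs unfolding Q_def by blast
    show "\<forall>p\<in>Proc Ng. proc_path Ng (nxt p) (seg p) \<and> hd (seg p) = d (nxt p) \<and>
               last (seg p) = d p \<and> (\<forall>y\<in>set (butlast (seg p)). p \<notin> ndom Ng y)"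
      using Qs unfolding Q_def by blast
  qed
qed

end
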